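(* Let $r_{\min}>0$ and let $P=(P_x,P_y,P_\theta)$ with $(P_x,P_y)\in\mathbb{R}^2$ and $P_\theta\in[0,2\pi)$ be a start configuration. Let $\mathcal{G}_\infty=\{(x,y)\in\mathbb{R}^2 : y=\mathcal{G}_y\}$ be a horizontal line with $\mathcal{G}_y>P_y$. Define $$m=\begin{cases}+1, & P_\theta\in[0,\tfrac{\pi}{2}]\cup[\tfrac{3\pi}{2},2\pi),\\ -1, & \text{otherwise},\end{cases}\qquad n=\begin{cases}0, & P_\theta\in[0,\tfrac{\pi}{2}],\\ \pi, & P_\theta\in(\tfrac{\pi}{2},\tfrac{3\pi}{2}],\\ 2\pi, & P_\theta\in(\tfrac{3\pi}{2},2\pi),\end{cases}$$ and $o_y=P_y+m\,r_{\min}\cos(P_\theta)$ (this is the $y$-coordinate of the center $o$ of the circle of radius $r_{\min}$ through $(P_x,P_y)$, tangent to the heading $P_\theta$, on which the vehicle rotates its heading toward $\pi/2$ by the shorter rotation). Consider all feasible paths (in the sense of the unicycle model below) starting at configuration $P$ and ending at any point of $\mathcal{G}_\infty$, with arbitrary final heading. Then a shortest such path exists and it is a Dubins path of the following form: 1. If $o_y\le \mathcal{G}_y$, it consists of a circular arc of radius $r_{\min}$ (turning the heading toward $\pi/2$ by the shorter rotation) followed by a straight segment, and the straight segment meets $\mathcal{G}_\infty$ at a right angle (i.e. has heading $\pi/2$). 2. If $o_y>\mathcal{G}_y$, it consists of a single circular arc of radius $r_{\min}$. Moreover, the length $h(P)$ of this shortest path is $$h(P)=\begin{cases} h_1(P)=r_{\min}\min\!\left(\left|P_\theta-\tfrac{\pi}{2}\right|,\left|P_\theta-\tfrac{5\pi}{2}\right|\right)+\mathcal{G}_y-o_y,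 & \text{if } o_y\le \mathcal{G}_y,\\[4pt] h_2(P)=r_{\min}\left|P_\theta-m\arccos\!\left(\dfrac{o_y-\mathcal{G}_y}{r_{\min}}\right)-n\right|, & \text{if } o_y>\mathcal{G}_y.\end{cases}$$
   Context: Vehicle model (forward-moving unicycle / Dubins car): a path is a curve $s\mapsto (x(s),y(s),\theta(s))$ parameterized by arc length $s\in[0,s_f]$ satisfying $\dot x(s)=\cos\theta(s)$, $\dot y(s)=\sin\theta(s)$, $\dot\theta(s)=\kappa(s)$ with $|\kappa(s)|\le \kappa_{\max}$, where derivatives are with respect to arc length and $r_{\min}=\kappa_{\max}^{-1}$ is the minimum turning radius. Such a path is called feasible; its length is $s_f$. Headings are angles in $[0,2\pi)$ measured from the positive $x$-axis. A Dubins path is a path composed of circular arcs of radius $r_{\min}$ ("C") and straight line segments ("S"). In the application, $\mathcal{G}_\infty$ is the line containing a goal segment located ahead of the vehicle (hence $\mathcal{G}_y>P_y$), and $h(P)$ is used as an admissible heuristic for A* search. *)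

theory Defs
  imports Complex_Main
begin

text \<open>A feasible path of length sf (arc-length parametrised) for the forward-moving
unicycle with minimum turning radius rmin: x' = cos th, y' = sin th on [0,sf], and
th' = kappa with |kappa| <= 1/rmin, rendered as th being (1/rmin)-Lipschitz on [0,sf]
(equivalently absolutely continuous with a.e. derivative bounded by 1/rmin).\<close>
definition feasible_path ::
  "real \<Rightarrow> real \<Rightarrow> (real \<Rightarrow> real) \<Rightarrow> (real \<Rightarrow> real) \<Rightarrow> (real \<Rightarrow> real) \<Rightarrow> bool" where
  "feasible_path rmin sf x y th \<longleftrightarrow>
     0 \<le> sf \<and>
     (\<forall>s\<in>{0..sf}. (x has_real_derivative cos (th s)) (at s within {0..sf}) \<and>
                   (y has_real_derivative sin (th s)) (at s within {0..sf})) \<and>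
     (\<forall>s\<in>{0..sf}. \<forall>t\<in>{0..sf}. \<bar>th s - th t\<bar> \<le> \<bar>s - t\<bar> / rmin)"

definition path_to_line ::
  "real \<Rightarrow> real \<Rightarrow> real \<Rightarrow> real \<Rightarrow> real \<Rightarrow> real \<Rightarrow>
   (real \<Rightarrow> real) \<Rightarrow> (real \<Rightarrow> real) \<Rightarrow> (real \<Rightarrow> real) \<Rightarrow> bool" where
  "path_to_line rmin Px Py Pth Gy sf x y th \<longleftrightarrow>
     feasible_path rmin sf x y th \<and> x 0 = Px \<and> y 0 = Py \<and> th 0 = Pth \<and> y sf = Gy"

definition m_sign :: "real \<Rightarrow> real" where
  "m_sign Pth = (if Pth \<in> {0..pi/2} \<union> {3*pi/2..<2*pi} then 1 else -1)"

definition n_off :: "real \<Rightarrow> real" where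
  "n_off Pth = (if Pth \<in> {0..pi/2} then 0
                else if Pth \<in> {pi/2<..3*pi/2} then pi else 2*pi)"

definition o_y :: "real \<Rightarrow> real \<Rightarrow> real \<Rightarrow> real" where
  "o_y rmin Py Pth = Py + m_sign Pth * rmin * cos Pth"

definition h1 :: "real \<Rightarrow> real \<Rightarrow> real \<Rightarrow> real \<Rightarrow> real" where
  "h1 rmin Py Pth Gy =
     rmin * min \<bar>Pth - pi/2\<bar> \<bar>Pth - 5*pi/2\<bar> + Gy - o_y rmin Py Pth"

definition h2 :: "real \<Rightarrow> real \<Rightarrow> real \<Rightarrow> real \<Rightarrow> real" where
  "h2 rmin Py Pth Gy =
     rmin * \<bar>Pth - m_sign Pth * arccos ((o_y rmin Py Pth - Gy) / rmin) - n_off Pth\<bar>"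

definition h_heur :: "real \<Rightarrow> real \<Rightarrow> real \<Rightarrow> real \<Rightarrow> real" where
  "h_heur rmin Py Pth Gy =
     (if o_y rmin Py Pth \<le> Gy then h1 rmin Py Pth Gy else h2 rmin Py Pth Gy)"

end

theory Submission
  imports Defs "HOL-Analysis.Analysis"
begin

lemma cmp:
  fixes f g f' g' :: "real \<Rightarrow> real"
  assumes "p \<le> q"
    and df: "\<And>x. x \<in> {p..q} \<Longrightarrow> (f has_real_derivative f' x) (at x within {p..q})"
    and dg: "\<And>x. x \<in> {p..q} \<Longrightarrow> (g has_real_derivative g' x) (at x within {p..q})"
    and le: "\<And>x. x \<in> {p..q} \<Longrightarrow> f' x \<le> g' x"
    and init: "f p \<le> g p"
  shows "f q \<le> g q"
proof -
  have d: "\<And>x. x \<in> {p..q} \<Longrightarrow> ((\<lambda>x. g x - f x) has_real_derivative (g' x - f' x)) (at x within {p..q})"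
    using df dg by (auto intro: derivative_intros)
  have "(\<lambda>x. g x - f x) p \<le> (\<lambda>x. g x - f x) q"
  proof (rule DERIV_nonneg_imp_increasing_open[OF assms(1)])
    fix x assume "p < x" "x < q"
    then have "((\<lambda>x. g x - f x) has_real_derivative (g' x - f' x)) (at x)"
      using d[of x] at_within_Icc_at[of p x q] by auto
    then show "\<exists>y. ((\<lambda>x. g x - f x) has_real_derivative y) (at x) \<and> 0 \<le> y"
      using le[of x] \<open>p<x\<close> \<open>x<q\<close> by auto
  next
    show "continuous_on {p..q} (\<lambda>x. g x - f x)" by (rule DERIV_continuous_on[OF d])
  qed
  then show ?thesis using init by simp
qed

lemma cos_le_aux:
  fixes e u :: real
  assumes "0 \<le> e" "e \<le> pi" "e \<le> u" "u \<le> 2*pi - e"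
  shows "cos u \<le> cos e"
proof (cases "u \<le> pi")
  case True then show ?thesis using assms cos_mono_le_eq by auto
next
  case False
  have "cos u = cos (2*pi - u)" by (simp add: cos_diff)
  also have "\<dots> \<le> cos e" using assms False cos_mono_le_eq[of "2*pi-u" e] by auto
  finally show ?thesis .
qed

lemma key_trig:
  fixes T phi d delta :: real
  assumes "sin T = 1" "cos T = 0" "0 \<le> d" "d \<le> pi" "0 \<le> delta"
    "\<bar>phi - (T - m*d)\<bar> \<le> delta" "m = 1 \<or> m = -1"
  shows "sin phi \<le> cos (max (d - delta) 0)"
proof (cases "d \<le> delta")
  case True then show ?thesis by simp
next
  case False
  have s: "sin phi = cos \<bar>phi - T\<bar>" using assms(1,2) by (simp add: cos_diff)
  have "d - delta \<le> \<bar>phi - T\<bar>" "\<bar>phi - T\<bar> \<le> 2*pi - (d-delta)"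
    using assms by (auto simp: abs_if split: if_splits)
  then show ?thesis using s False assms cos_le_aux[of "d-delta" "\<bar>phi - T\<bar>"] by auto
qed

lemma geom:
  fixes Pth :: real
  assumes P: "Pth \<in> {0..<2*pi}"
    and Tdef: "T = (if Pth < 3*pi/2 then pi/2 else 5*pi/2)"
    and mdef: "m = m_sign Pth" and ddef: "d = m*(T - Pth)"
  shows "m = 1 \<or> m = -1" "Pth = T - m*d" "0 \<le> d" "d \<le> pi" "sin T = 1" "cos T = 0"
    "min \<bar>Pth - pi/2\<bar> \<bar>Pth - 5*pi/2\<bar> = d"
    "m * cos Pth = sin d"
    "d < pi \<Longrightarrow> -1 \<le> c \<Longrightarrow> c \<le> 1 \<Longrightarrow> \<bar>Pth - m*arccos c - n_off Pth\<bar> = \<bar>d - arcsin c\<bar>"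
proof -
  have s5: "sin (5*pi/2) = 1" "cos (5*pi/2) = 0"
  proof -
    have "5*pi/2 = pi/2 + 2*pi" by simp
    then show "sin (5*pi/2) = 1" "cos (5*pi/2) = 0" by (simp_all only: sin_periodic cos_periodic) simp_all
  qed
  show m1: "m = 1 \<or> m = -1" using mdef by (simp add: m_sign_def)
  then show Pd: "Pth = T - m*d" using ddef by auto
  show sT: "sin T = 1" "cos T = 0" using Tdef s5 by auto
  consider "Pth \<le> pi/2" | "pi/2 < Pth" "Pth < 3*pi/2" | "3*pi/2 \<le> Pth" by linarith
  then have "0 \<le> d \<and> d \<le> pi \<and> min \<bar>Pth - pi/2\<bar> \<bar>Pth - 5*pi/2\<bar> = d"
  proof cases
    case 1 then show ?thesis using P Tdef mdef ddef by (simp add: m_sign_def)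
  next
    case 2 then show ?thesis using P Tdef mdef ddef by (simp add: m_sign_def)
  next
    case 3 then show ?thesis using P Tdef mdef ddef by (simp add: m_sign_def)
  qed
  then show "0 \<le> d" "d \<le> pi" "min \<bar>Pth - pi/2\<bar> \<bar>Pth - 5*pi/2\<bar> = d" by auto
  have "cos Pth = cos (T - m*d)" using Pd by simp
  also have "\<dots> = sin (m*d)" using sT by (simp add: cos_diff)
  finally show "m * cos Pth = sin d" using m1 by auto
  assume dpi: "d < pi" and c: "-1 \<le> c" "c \<le> 1"
  then have ac: "arccos c = pi/2 - arcsin c" by (simp add: arccos_arcsin_eq)
  consider "Pth \<le> pi/2" | "pi/2 < Pth" "Pth \<le> 3*pi/2" | "3*pi/2 < Pth" by linarith
  then show "\<bar>Pth - m*arccos c - n_off Pth\<bar> = \<bar>d - arcsin c\<bar>"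
  proof cases
    case 1 then show ?thesis using P Tdef mdef ddef by (simp add: m_sign_def n_off_def ac)
  next
    case 2
    have "Pth \<noteq> 3*pi/2"
    proof
      assume e: "Pth = 3*pi/2"
      then have "T = 5*pi/2" "m = 1" using Tdef mdef pi_gt_zero by (auto simp: m_sign_def)
      then have "d = pi" using ddef e by simp
      then show False using dpi by simp
    qed
    with 2 have "Pth < 3*pi/2" by simp
    then show ?thesis using 2 P Tdef mdef ddef by (simp add: m_sign_def n_off_def ac abs_minus_commute)
  next
    case 3 then show ?thesis using P Tdef mdef ddef by (simp add: m_sign_def n_off_def ac)
  qed
qed

theorem mainTheorem1:
  fixes rmin Px Py Pth Gy :: real
  assumes "rmin > 0" and "Pth \<in> {0..<2*pi}" and "Gy > Py"
  shows "\<exists>sf x y th.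
           path_to_line rmin Px Py Pth Gy sf x y th \<and>
           (\<forall>sf' x' y' th'. path_to_line rmin Px Py Pth Gy sf' x' y' th' \<longrightarrow> sf \<le> sf') \<and>
           sf = h_heur rmin Py Pth Gy \<and>
           (o_y rmin Py Pth \<le> Gy \<longrightarrow>
              (\<exists>a. 0 \<le> a \<and> a \<le> sf \<and>
                 (\<forall>s\<in>{0..a}. th s = Pth + m_sign Pth * s / rmin) \<and>
                 (\<forall>s\<in>{a..sf}. th s = th a) \<and>
                 cos (th a) = 0 \<and> sin (th a) = 1)) \<and>
           (Gy < o_y rmin Py Pth \<longrightarrow>
              (\<exists>\<sigma>\<in>{-1, 1::real}. \<forall>s\<in>{0..sf}. th s = Pth + \<sigma> * s / rmin))"
proof -
  note r = assms(1)
  define T where "T = (if Pth < 3*pi/2 then pi/2 else 5*pi/2)"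
  define m where "m = m_sign Pth"
  define d where "d = m*(T - Pth)"
  note g = geom[OF assms(2) T_def m_def d_def]
  have m1: "m = 1 \<or> m = -1" and Pd: "Pth = T - m*d" and d0: "0 \<le> d" and dpi: "d \<le> pi"
    and sT: "sin T = 1" and cT: "cos T = 0" using g by auto
  define a where "a = rmin*d"
  have a0: "0 \<le> a" using a_def d0 r by simp
  define th where "th s = Pth + m*min s a / rmin" for s
  define X where "X s = Px + integral {0..s} (\<lambda>u. cos (th u))" for s
  define Y where "Y s = Py + integral {0..s} (\<lambda>u. sin (th u))" for s
  define oy where "oy = o_y rmin Py Pth"
  have oy: "oy = Py + rmin * sin d"
    using g(8) unfolding oy_def o_y_def m_def[symmetric] by (simp add: algebra_simps)
  have thc: "continuous_on S th" for S unfolding th_def by (intro continuous_intros) (use r in auto)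
  have dY: "(Y has_real_derivative sin (th s)) (at s within {0..b})" if "s \<in> {0..b}" for s b
    unfolding Y_def
    by (rule DERIV_add[OF DERIV_const integral_has_real_derivative, simplified])
       (use that in \<open>auto intro!: continuous_intros thc\<close>)
  have dX: "(X has_real_derivative cos (th s)) (at s within {0..b})" if "s \<in> {0..b}" for s b
    unfolding X_def
    by (rule DERIV_add[OF DERIV_const integral_has_real_derivative, simplified])
       (use that in \<open>auto intro!: continuous_intros thc\<close>)
  have sinth: "sin (th s) = cos (max (d - s/rmin) 0)" if "0 \<le> s" for s
  proof -
    have "min s a / rmin = min (s/rmin) d" using r by (simp add: a_def min_def divide_right_mono pos_divide_le_eq mult.commute)
    then have "th s = Pth + m * min (s/rmin) d" unfolding th_def by (metis times_divide_eq_right)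
    also have "\<dots> = T - m * (d - min (s/rmin) d)" using Pd by (simp add: algebra_simps)
    also have "d - min (s/rmin) d = max (d - s/rmin) 0" by (simp add: min_def max_def)
    finally have "th s = T - m * max (d - s/rmin) 0" .
    then have "sin (th s) = cos (m * max (d - s/rmin) 0)" using sT cT by (simp add: sin_diff)
    then show ?thesis using m1 by auto
  qed
  have lip: "\<bar>th s - th t\<bar> \<le> \<bar>s - t\<bar> / rmin" for s t
  proof -
    have "\<bar>th s - th t\<bar> = \<bar>min s a - min t a\<bar> / rmin" unfolding th_def using m1 r
      by (auto simp: abs_divide diff_divide_distrib[symmetric] right_diff_distrib[symmetric] abs_minus_commute)
    also have "\<dots> \<le> \<bar>s - t\<bar> / rmin" using r by (intro divide_right_mono) (auto simp: min_def)
    finally show ?thesis .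
  qed
  have th0: "th 0 = Pth" using a0 by (simp add: th_def)
  have Y0: "Y 0 = Py" "X 0 = Px" by (simp_all add: Y_def X_def)
  have Yarc: "Y s = oy - rmin * sin (d - s/rmin)" if s: "0 \<le> s" "s \<le> a" for s
  proof -
    define C where "C u = oy - rmin * sin (d - u/rmin)" for u
    have dC: "(C has_real_derivative sin (th u)) (at u within {0..s})" if "u \<in> {0..s}" for u
    proof -
      have "max (d - u/rmin) 0 = d - u/rmin" using that s r
        by (simp add: a_def max_def field_simps)
      then have e: "sin (th u) = cos (d - u/rmin)" using sinth that by auto
      show ?thesis unfolding C_def e
        using r by (auto intro!: derivative_eq_intros simp: field_simps)
    qed
    have C0: "C 0 = Y 0" using Y0 oy by (simp add: C_def)
    have "Y s \<le> C s" by (rule cmp[OF s(1) dY dC]) (use C0 in auto)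
    moreover have "C s \<le> Y s" by (rule cmp[OF s(1) dC dY]) (use C0 in auto)
    ultimately show ?thesis unfolding C_def by simp
  qed
  have Ya: "Y a = oy" using Yarc[OF a0 order_refl] r by (simp add: a_def)
  have Ylin: "Y s = oy + (s - a)" if s: "a \<le> s" for s
  proof -
    define C where "C u = oy + (u - a)" for u
    have dC: "(C has_real_derivative sin (th u)) (at u within {a..s})" if "u \<in> {a..s}" for u
    proof -
      have "max (d - u/rmin) 0 = 0" using that s r
        by (simp add: a_def max_def field_simps)
      then have e: "sin (th u) = 1" using sinth that a0 by auto
      show ?thesis unfolding C_def e
        by (auto intro!: derivative_eq_intros)
    qed
    have dY': "(Y has_real_derivative sin (th u)) (at u within {a..s})" if "u \<in> {a..s}" for u
      using dY[of u s] that a0 by (auto intro: DERIV_subset)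
    have C0: "C a = Y a" using Ya by (simp add: C_def)
    have "Y s \<le> C s" by (rule cmp[OF s dY' dC]) (use C0 in auto)
    moreover have "C s \<le> Y s" by (rule cmp[OF s dC dY']) (use C0 in auto)
    ultimately show ?thesis unfolding C_def by simp
  qed
  have lower: "Gy \<le> Y sf'" if p: "path_to_line rmin Px Py Pth Gy sf' x' y' th'" for sf' x' y' th'
  proof -
    have F: "feasible_path rmin sf' x' y' th'" and e: "y' 0 = Py" "th' 0 = Pth" "y' sf' = Gy"
      using p unfolding path_to_line_def by auto
    have sf0: "0 \<le> sf'" and dy': "\<And>u. u \<in> {0..sf'} \<Longrightarrow> (y' has_real_derivative sin (th' u)) (at u within {0..sf'})"
      using F unfolding feasible_path_def by auto
    have L: "\<bar>th' u - th' 0\<bar> \<le> \<bar>u - 0\<bar> / rmin" if "u \<in> {0..sf'}" for u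
    proof -
      have "0 \<in> {0..sf'}" using sf0 by auto
      then show ?thesis using F that unfolding feasible_path_def by blast
    qed
    have le: "sin (th' u) \<le> sin (th u)" if "u \<in> {0..sf'}" for u
    proof -
      have "sin (th' u) \<le> cos (max (d - u/rmin) 0)"
        by (rule key_trig[OF sT cT d0 dpi _ _ m1]) (use that L[of u] e Pd r in auto)
      then show ?thesis using sinth that by auto
    qed
    have "y' sf' \<le> Y sf'" by (rule cmp[OF sf0 dy' dY le]) (use e Y0 in auto)
    then show ?thesis using e by simp
  qed
  have generic: "path_to_line rmin Px Py Pth Gy h X Y th \<and>
           (\<forall>sf' x' y' th'. path_to_line rmin Px Py Pth Gy sf' x' y' th' \<longrightarrow> h \<le> sf')"
    if h0: "0 \<le> h" and Yh: "Y h = Gy" and below: "\<And>t. 0 \<le> t \<Longrightarrow> t < h \<Longrightarrow> Y t < Gy" for h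
  proof (intro conjI allI impI)
    show "path_to_line rmin Px Py Pth Gy h X Y th"
      unfolding path_to_line_def feasible_path_def using h0 Yh th0 Y0 dX dY lip by auto
  next
    fix sf' x' y' th' assume p: "path_to_line rmin Px Py Pth Gy sf' x' y' th'"
    then have "0 \<le> sf'" unfolding path_to_line_def feasible_path_def by auto
    show "h \<le> sf'"
    proof (rule ccontr)
      assume "\<not> h \<le> sf'"
      then have "Y sf' < Gy" using below \<open>0 \<le> sf'\<close> by auto
      then show False using lower[OF p] by simp
    qed
  qed
  show ?thesis
  proof (cases "oy \<le> Gy")
    case True
    define h where "h = rmin*d + Gy - oy"
    have hh: "h = h_heur rmin Py Pth Gy" using True g(7)
      unfolding h_def h_heur_def h1_def oy_def by simp
    have ah: "a \<le> h" using True by (simp add: h_def a_def)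
    have Yh: "Y h = Gy" using Ylin[OF ah] by (simp add: h_def a_def)
    have below: "Y t < Gy" if t: "0 \<le> t" "t < h" for t
    proof (cases "a \<le> t")
      case True then show ?thesis using Ylin t by (simp add: h_def a_def)
    next
      case False
      have Yt: "Y t = oy - rmin * sin (d - t/rmin)" using Yarc t False by simp
      have lt: "t/rmin < d" using False r by (simp add: a_def field_simps)
      show ?thesis
      proof (cases "d - t/rmin < pi")
        case True
        have "0 < sin (d - t/rmin)" using True lt by (intro sin_gt_zero) auto
        then show ?thesis using Yt r \<open>oy \<le> Gy\<close> by (smt (verit) mult_pos_pos)
      next
        case False
        have "0 \<le> t/rmin" using t r by simp
        then have "t/rmin = 0" using False dpi by linarith
        then have "t = 0" using r by simp
        then show ?thesis using Y0 assms(3) by simp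
      qed
    qed
    have thA: "th a = T" using r Pd m1 by (auto simp: th_def a_def)
    show ?thesis
    proof (intro exI conjI)
      show "path_to_line rmin Px Py Pth Gy h X Y th" using generic[OF _ Yh below] ah a0 by auto
      show "\<forall>sf' x' y' th'. path_to_line rmin Px Py Pth Gy sf' x' y' th' \<longrightarrow> h \<le> sf'"
        using generic[OF _ Yh below] ah a0 by auto
      show "h = h_heur rmin Py Pth Gy" by (rule hh)
      show "o_y rmin Py Pth \<le> Gy \<longrightarrow>
              (\<exists>a. 0 \<le> a \<and> a \<le> h \<and>
                 (\<forall>s\<in>{0..a}. th s = Pth + m_sign Pth * s / rmin) \<and>
                 (\<forall>s\<in>{a..h}. th s = th a) \<and>
                 cos (th a) = 0 \<and> sin (th a) = 1)"
        using a0 ah thA sT cT by (intro impI exI[of _ a]) (auto simp: th_def m_def)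
      show "Gy < o_y rmin Py Pth \<longrightarrow> (\<exists>\<sigma>\<in>{-1, 1::real}. \<forall>s\<in>{0..h}. th s = Pth + \<sigma> * s / rmin)"
        using True oy_def by simp
    qed
  next
    case False
    define c where "c = (oy - Gy)/rmin"
    have c0: "0 < c" using False r by (simp add: c_def)
    have csd: "c < sin d" using oy assms(3) r by (simp add: c_def field_simps)
    have c1: "c < 1" using csd sin_le_one[of d] by linarith
    have dpi': "d < pi" using csd c0 sin_pi dpi by (cases "d = pi") auto
    define q where "q = arcsin c"
    have q: "0 < q" "q < pi/2" "sin q = c" unfolding q_def using c0 c1 arcsin_lt_bounded[of c]
      by (auto simp: arcsin_less_mono[of 0 c, simplified])
    have qd: "q < d"
    proof (cases "d \<le> pi/2")
      case True
      have "arcsin c < arcsin (sin d)" using csd c0 c1 by (subst arcsin_less_mono) auto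
      then show ?thesis using True d0 by (simp add: q_def arcsin_sin)
    next
      case False then show ?thesis using q by simp
    qed
    define h where "h = rmin*(d - q)"
    have hh: "h = h_heur rmin Py Pth Gy" using False g(9)[OF dpi', of c] c0 c1 qd
      unfolding h_def h_heur_def h2_def oy_def[symmetric] c_def[symmetric] q_def[symmetric] m_def[symmetric] by simp
    have ha: "h \<le> a" using q r by (simp add: h_def a_def)
    have h0: "0 \<le> h" using qd r by (simp add: h_def)
    have Yh: "Y h = Gy" using Yarc[OF h0 ha] q r by (simp add: h_def c_def)
    have below: "Y t < Gy" if t: "0 \<le> t" "t < h" for t
    proof -
      have Yt: "Y t = oy - rmin * sin (d - t/rmin)" using Yarc t ha by simp
      have p1: "q < d - t/rmin" using t r by (simp add: h_def field_simps)
      have p2: "d - t/rmin \<le> d" using t r by simp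
      have "c < sin (d - t/rmin)"
      proof (cases "d - t/rmin \<le> pi/2")
        case True
        have "sin q < sin (d - t/rmin)" using p1 True q by (intro sin_monotone_2pi) auto
        then show ?thesis using q by simp
      next
        case False
        have "sin (pi - d) \<le> sin (pi - (d - t/rmin))" using p2 False dpi
          by (intro sin_monotone_2pi_le) auto
        then have "sin d \<le> sin (d - t/rmin)" by simp
        then show ?thesis using csd by simp
      qed
      then show ?thesis using Yt r by (simp add: c_def field_simps)
    qed
    show ?thesis
    proof (intro exI conjI)
      show "path_to_line rmin Px Py Pth Gy h X Y th" using generic[OF h0 Yh below] by auto
      show "\<forall>sf' x' y' th'. path_to_line rmin Px Py Pth Gy sf' x' y' th' \<longrightarrow> h \<le> sf'"
        using generic[OF h0 Yh below] by auto
      show "h = h_heur rmin Py Pth Gy" by (rule hh)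
      show "o_y rmin Py Pth \<le> Gy \<longrightarrow>
              (\<exists>a. 0 \<le> a \<and> a \<le> h \<and>
                 (\<forall>s\<in>{0..a}. th s = Pth + m_sign Pth * s / rmin) \<and>
                 (\<forall>s\<in>{a..h}. th s = th a) \<and>
                 cos (th a) = 0 \<and> sin (th a) = 1)"
        using False oy_def by simp
      show "Gy < o_y rmin Py Pth \<longrightarrow> (\<exists>\<sigma>\<in>{-1, 1::real}. \<forall>s\<in>{0..h}. th s = Pth + \<sigma> * s / rmin)"
        using m1 ha by (intro impI bexI[of _ m]) (auto simp: th_def min_def)
    qed
  qed
qed

end
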